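(* Let $(X_1,\Sigma_1),\dots,(X_N,\Sigma_N)$ be i.i.d. copies of a random pair $(X,\Sigma)$ valued in $\mathcal{X}\times\mathfrak{S}_n$. Suppose that $P_x\in\mathcal{T}$ for all $x\in\mathcal{X}$ and that $$H=\inf_{x\in\mathcal{X}}\min_{i<j}|p_{i,j}(x)-1/2|>0.$$ Let $\mathcal{S}_0$ be a class of measurable maps $\mathcal{X}\to\mathfrak{S}_n$ with finite cardinality $C<+\infty$ that contains the rule $s^*(x)=\sigma^*_{P_x}$. Let $\widehat{s}_N$ be any minimizer over $\mathcal{S}_0$ of $\widehat{\mathcal{R}}_N(s)=\frac1N\sum_{k=1}^N d_\tau(s(X_k),\Sigma_k)$. Then, for any $\delta\in(0,1)$, with probability at least $1-\delta$: $$\mathcal{R}(\widehat{s}_N)-\mathcal{R}^*\le \Big(\frac{n(n-1)}{2H}\Big)\times\frac{\log(C/\delta)}{N}.$$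
   Context: $\mathfrak{S}_n$ is the set of permutations of $\{1,\dots,n\}$. The Kendall $\tau$ distance is $d_\tau(\sigma,\sigma')=\sum_{i<j}\mathbb{I}\{(\sigma(i)-\sigma(j))(\sigma'(i)-\sigma'(j))<0\}$. $P_x$ is the conditional distribution of $\Sigma$ given $X=x$, and $p_{i,j}(x)=\mathbb{P}\{\Sigma(i)<\Sigma(j)\mid X=x\}$. A distribution $P$ on $\mathfrak{S}_n$ with pairwise probabilities $p_{i,j}=\mathbb{P}_{\Sigma\sim P}\{\Sigma(i)<\Sigma(j)\}$ is strictly stochastically transitive if (a) $p_{i,j}\ge1/2$ and $p_{j,k}\ge1/2$ imply $p_{i,k}\ge1/2$ for all $i,j,k$, and (b) $p_{i,j}\neq1/2$ for all $i<j$. $\mathcal{T}$ is the set of such distributions. For $P\in\mathcal{T}$, the unique minimizer $\sigma^*_P$ of $\sigma\mapsto\mathbb{E}_{\Sigma\sim P}[d_\tau(\Sigma,\sigma)]$ is given by $\sigma^*_P(i)=1+\sum_{k\neq i}\mathbb{I}\{p_{i,k}<1/2\}$. The risk is $\mathcal{R}(s)=\mathbb{E}[d_\tau(s(X),\Sigma)]$, and $\mathcal{R}^*$ is its infimum over all measurable $s:\mathcal{X}\to\mathfrak{S}_n$. *)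

theory Defs
  imports "HOL-Probability.Probability"
begin

text \<open>Permutations of {1..n}, represented as functions nat => nat fixing everything outside {1..n}.\<close>
definition perms :: "nat \<Rightarrow> (nat \<Rightarrow> nat) set" where
  "perms n = {\<sigma>. \<sigma> permutes {1..n}}"

definition dtau :: "nat \<Rightarrow> (nat \<Rightarrow> nat) \<Rightarrow> (nat \<Rightarrow> nat) \<Rightarrow> real" where
  "dtau n \<sigma> \<sigma>' = (\<Sum>i\<in>{1..n}. \<Sum>j\<in>{i<..n}.
      (if (int (\<sigma> i) - int (\<sigma> j)) * (int (\<sigma>' i) - int (\<sigma>' j)) < 0 then 1 else 0))"

definition pw :: "(nat \<Rightarrow> nat) pmf \<Rightarrow> nat \<Rightarrow> nat \<Rightarrow> real" where
  "pw P i j = measure_pmf.prob P {\<sigma>. \<sigma> i < \<sigma> j}"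

text \<open>Strict stochastic transitivity (the class T), for distributions on S_n.\<close>
definition SST :: "nat \<Rightarrow> (nat \<Rightarrow> nat) pmf \<Rightarrow> bool" where
  "SST n P \<longleftrightarrow> set_pmf P \<subseteq> perms n \<and>
     (\<forall>i\<in>{1..n}. \<forall>j\<in>{1..n}. \<forall>k\<in>{1..n}.
        pw P i j \<ge> 1/2 \<and> pw P j k \<ge> 1/2 \<longrightarrow> pw P i k \<ge> 1/2) \<and>
     (\<forall>i\<in>{1..n}. \<forall>j\<in>{1..n}. i < j \<longrightarrow> pw P i j \<noteq> 1/2)"

definition sigma_star :: "nat \<Rightarrow> (nat \<Rightarrow> nat) pmf \<Rightarrow> nat \<Rightarrow> nat" where
  "sigma_star n P = (\<lambda>i. if i \<in> {1..n} then 1 + card {k\<in>{1..n}. k \<noteq> i \<and> pw P i k < 1/2} else i)"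

definition rules :: "'x measure \<Rightarrow> nat \<Rightarrow> ('x \<Rightarrow> nat \<Rightarrow> nat) set" where
  "rules Mx n = {s. s \<in> measurable Mx (count_space UNIV) \<and> (\<forall>x\<in>space Mx. s x \<in> perms n)}"

definition risk :: "nat \<Rightarrow> ('x \<times> (nat \<Rightarrow> nat)) measure \<Rightarrow> ('x \<Rightarrow> nat \<Rightarrow> nat) \<Rightarrow> real" where
  "risk n D s = (\<integral>z. dtau n (s (fst z)) (snd z) \<partial>D)"

definition risk_star :: "nat \<Rightarrow> 'x measure \<Rightarrow> ('x \<times> (nat \<Rightarrow> nat)) measure \<Rightarrow> real" where
  "risk_star n Mx D = (INF s\<in>rules Mx n. risk n D s)"

definition emp_risk :: "nat \<Rightarrow> nat \<Rightarrow> (nat \<Rightarrow> 'x \<times> (nat \<Rightarrow> nat)) \<Rightarrow> ('x \<Rightarrow> nat \<Rightarrow> nat) \<Rightarrow> real" where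
  "emp_risk n N \<omega> s = (1 / real N) * (\<Sum>k<N. dtau n (s (fst (\<omega> k))) (snd (\<omega> k)))"

end

theory Submission
  imports Defs
begin
definition Pairs :: "nat \<Rightarrow> (nat \<times> nat) set" where
  "Pairs n = Sigma {1..n} (\<lambda>i. {i<..n})"

definition I2 :: "(nat\<Rightarrow>nat) \<Rightarrow> (nat\<Rightarrow>nat) \<Rightarrow> nat \<times> nat \<Rightarrow> real" where
  "I2 \<sigma> \<tau> p = (if (int (\<sigma> (fst p)) - int (\<sigma> (snd p))) * (int (\<tau> (fst p)) - int (\<tau> (snd p))) < 0 then 1 else 0)"

lemma finite_Pairs[simp]: "finite (Pairs n)"
  unfolding Pairs_def by auto

lemma dtau_Pairs: "dtau n \<sigma> \<tau> = (\<Sum>p\<in>Pairs n. I2 \<sigma> \<tau> p)"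
  unfolding dtau_def Pairs_def I2_def by (subst sum.Sigma) (auto simp: case_prod_beta)

lemma card_Pairs_aux: "2 * (\<Sum>i\<in>{1..n}. n - i) = n * (n - 1::nat)"
proof (induction n)
  case 0 then show ?case by simp
next
  case (Suc n)
  have "(\<Sum>i\<in>{1..Suc n}. Suc n - i) = (\<Sum>i\<in>{1..n}. Suc n - i)"
    by (simp add: sum.atLeast_Suc_atMost_Suc_shift)
  also have "\<dots> = (\<Sum>i\<in>{1..n}. (n - i) + 1)"
    by (intro sum.cong) auto
  also have "\<dots> = (\<Sum>i\<in>{1..n}. n - i) + n" by (simp only: sum.distrib) simp
  finally show ?case using Suc by (cases n) (auto simp: algebra_simps)
qed

lemma card_Pairs: "2 * card (Pairs n) = n * (n - 1)"
proof -
  have "card (Pairs n) = (\<Sum>i\<in>{1..n}. card {i<..n})"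
    unfolding Pairs_def by (subst card_SigmaI) auto
  then show ?thesis using card_Pairs_aux[of n] by simp
qed

lemma perms_inj: "\<sigma> \<in> perms n \<Longrightarrow> i \<in> {1..n} \<Longrightarrow> j \<in> {1..n} \<Longrightarrow> i \<noteq> j \<Longrightarrow> \<sigma> i \<noteq> \<sigma> j"
  unfolding perms_def by (auto dest: permutes_inj inj_onD)

lemma finite_perms[simp]: "finite (perms n)"
  unfolding perms_def using finite_permutations[of "{1..n}"] by simp

lemma pw_compl:
  assumes "set_pmf P \<subseteq> perms n" "i \<in> {1..n}" "j \<in> {1..n}" "i \<noteq> j"
  shows "pw P j i = 1 - pw P i j"
proof -
  have "pw P j i = measure_pmf.prob P (UNIV - {\<sigma>. \<sigma> i < \<sigma> j})"
    unfolding pw_def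
  proof (rule measure_pmf.finite_measure_eq_AE)
    show "AE x in measure_pmf P. (x \<in> {\<sigma>. \<sigma> j < \<sigma> i}) = (x \<in> UNIV - {\<sigma>. \<sigma> i < \<sigma> j})"
      using assms perms_inj[of _ n i j] by (auto simp: AE_measure_pmf_iff) (metis subsetD linorder_neqE_nat)+
  qed auto
  also have "\<dots> = 1 - pw P i j"
    unfolding pw_def by (subst measure_pmf.prob_compl[symmetric]) auto
  finally show ?thesis .
qed

lemma arith1:
  fixes H q :: real
  assumes "0 < H" "H \<le> q - 1/2"
  shows "q / (1+2*H) + (1+2*H)*(1-q) \<le> 1 - H*(2*q-1)"
proof -
  have "q / (1+2*H) + (1+2*H)*(1-q) - (1 - H*(2*q-1)) = -2*H*(q - 1/2 - H)/(1+2*H)"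
    using assms by (simp add: field_simps)
  also have "\<dots> \<le> 0" using assms by (intro divide_nonpos_pos) (auto simp: mult_nonneg_nonneg)
  finally show ?thesis by simp
qed

lemma sign_lemma:
  fixes a b c d :: nat
  assumes "a \<noteq> b" "c \<noteq> d"
  shows "((int a - int b) * (int c - int d) < 0) \<longleftrightarrow> ((a < b) \<noteq> (c < d))"
  using assms by (auto simp: mult_less_0_iff)

lemma expect_ite:
  assumes "\<And>\<tau>. \<tau> \<in> set_pmf P \<Longrightarrow> f \<tau> = (if \<tau> i < \<tau> j then a else b)"
  shows "measure_pmf.expectation P f = a * pw P i j + b * (1 - pw P i j)"
proof -
  have "measure_pmf.expectation P f = measure_pmf.expectation P (\<lambda>\<tau>. b + (a - b) * indicator {\<tau>. \<tau> i < \<tau> j} \<tau>)"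
    using assms by (intro integral_cong_AE) (auto simp: AE_measure_pmf_iff)
  also have "\<dots> = (\<integral>\<tau>. b \<partial>P) + (\<integral>\<tau>. (a - b) * indicator {\<tau>. \<tau> i < \<tau> j} \<tau> \<partial>P)"
    by (rule Bochner_Integration.integral_add) (auto intro!: integrable_real_indicator simp: measure_pmf.emeasure_eq_measure)
  also have "\<dots> = b + (a - b) * pw P i j"
    unfolding pw_def by simp
  finally show ?thesis by (simp add: algebra_simps)
qed

lemma I2_perm:
  assumes "\<sigma> (fst p) \<noteq> \<sigma> (snd p)" "\<tau> (fst p) \<noteq> \<tau> (snd p)"
  shows "I2 \<sigma> \<tau> p = (if \<tau> (fst p) < \<tau> (snd p) then (if \<sigma> (fst p) < \<sigma> (snd p) then 0 else 1)
                      else (if \<sigma> (fst p) < \<sigma> (snd p) then 1 else 0))"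
  unfolding I2_def using sign_lemma[OF assms] by auto

lemma pair_bound:
  assumes P: "set_pmf P \<subseteq> perms n" and ij: "i \<in> {1..n}" "j \<in> {1..n}" "i < j"
    and \<sigma>: "\<sigma> \<in> perms n" and \<sigma>s: "\<sigma>s \<in> perms n"
    and agree: "\<sigma>s i < \<sigma>s j \<longleftrightarrow> pw P i j > 1/2"
    and H: "0 < H" "H \<le> \<bar>pw P i j - 1/2\<bar>"
  shows "0 \<le> measure_pmf.expectation P (\<lambda>\<tau>. I2 \<sigma> \<tau> (i,j) - I2 \<sigma>s \<tau> (i,j))"
    and "measure_pmf.expectation P (\<lambda>\<tau>. exp (- ln (1+2*H) * (I2 \<sigma> \<tau> (i,j) - I2 \<sigma>s \<tau> (i,j))))
          \<le> 1 - H * measure_pmf.expectation P (\<lambda>\<tau>. I2 \<sigma> \<tau> (i,j) - I2 \<sigma>s \<tau> (i,j))"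
proof -
  define q where "q = pw P i j"
  define c where "c = (\<sigma> i < \<sigma> j)"
  define cs where "cs = (\<sigma>s i < \<sigma>s j)"
  define A :: real where "A = (if c then 0 else 1) - (if cs then 0 else 1)"
  define B :: real where "B = (if c then 1 else 0) - (if cs then 1 else 0)"
  define \<mu> where "\<mu> = ln (1+2*H)"
  have ne: "\<sigma> i \<noteq> \<sigma> j" "\<sigma>s i \<noteq> \<sigma>s j" using perms_inj \<sigma> \<sigma>s ij by auto
  have W: "I2 \<sigma> \<tau> (i,j) - I2 \<sigma>s \<tau> (i,j) = (if \<tau> i < \<tau> j then A else B)" if "\<tau> \<in> set_pmf P" for \<tau>
  proof -
    have "\<tau> i \<noteq> \<tau> j" using perms_inj[of \<tau> n i j] that P ij by auto
    then show ?thesis using I2_perm[of \<sigma> "(i,j)" \<tau>] I2_perm[of \<sigma>s "(i,j)" \<tau>] ne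
      unfolding A_def B_def c_def cs_def by auto
  qed
  have EW: "measure_pmf.expectation P (\<lambda>\<tau>. I2 \<sigma> \<tau> (i,j) - I2 \<sigma>s \<tau> (i,j)) = A * q + B * (1 - q)"
    unfolding q_def by (rule expect_ite) (rule W)
  have EE: "measure_pmf.expectation P (\<lambda>\<tau>. exp (- \<mu> * (I2 \<sigma> \<tau> (i,j) - I2 \<sigma>s \<tau> (i,j))))
      = exp (-\<mu>*A) * q + exp (-\<mu>*B) * (1 - q)"
    unfolding q_def by (rule expect_ite) (simp add: W)
  have u: "exp \<mu> = 1 + 2*H" "exp (-\<mu>) = 1 / (1+2*H)" using H unfolding \<mu>_def
    by (auto simp: exp_minus inverse_eq_divide)
  have q01: "0 \<le> q" "q \<le> 1" unfolding q_def pw_def by auto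
  have "0 \<le> A * q + B * (1 - q) \<and> exp (-\<mu>*A) * q + exp (-\<mu>*B) * (1 - q) \<le> 1 - H * (A * q + B * (1 - q))"
  proof (cases "c = cs")
    case True
    then show ?thesis unfolding A_def B_def by auto
  next
    case False
    show ?thesis
    proof (cases cs)
      case True
      with False agree have "c = False" "q > 1/2" unfolding cs_def q_def by auto
      then have AB: "A = 1" "B = -1" and "H \<le> q - 1/2" using True H unfolding A_def B_def q_def by auto
      then show ?thesis using arith1[of H q] H u by (auto simp: algebra_simps)
    next
      case cF: False
      with False agree H have "c = True" "q < 1/2" unfolding cs_def q_def by auto
      then have AB: "A = -1" "B = 1" and "H \<le> (1 - q) - 1/2" using cF H unfolding A_def B_def q_def by auto
      then show ?thesis using arith1[of H "1-q"] H u by (auto simp: algebra_simps)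
    qed
  qed
  then show "0 \<le> measure_pmf.expectation P (\<lambda>\<tau>. I2 \<sigma> \<tau> (i,j) - I2 \<sigma>s \<tau> (i,j))"
    and "measure_pmf.expectation P (\<lambda>\<tau>. exp (- ln (1+2*H) * (I2 \<sigma> \<tau> (i,j) - I2 \<sigma>s \<tau> (i,j))))
          \<le> 1 - H * measure_pmf.expectation P (\<lambda>\<tau>. I2 \<sigma> \<tau> (i,j) - I2 \<sigma>s \<tau> (i,j))"
    using EW EE unfolding \<mu>_def by auto
qed

lemma SST_ne:
  assumes "SST n P" "i \<in> {1..n}" "j \<in> {1..n}" "i \<noteq> j"
  shows "pw P i j \<noteq> 1/2"
proof (cases "i < j")
  case True then show ?thesis using assms unfolding SST_def by auto
next
  case False
  then have "j < i" using assms by auto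
  then have "pw P j i \<noteq> 1/2" using assms unfolding SST_def by auto
  moreover have "pw P j i = 1 - pw P i j" using pw_compl[of P n i j] assms unfolding SST_def by auto
  ultimately show ?thesis by auto
qed

lemma star_mono:
  assumes sst: "SST n P" and ij: "i \<in> {1..n}" "j \<in> {1..n}" "i \<noteq> j" and p: "pw P j i > 1/2"
  shows "sigma_star n P j < sigma_star n P i"
proof -
  have P: "set_pmf P \<subseteq> perms n" using sst unfolding SST_def by auto
  define A where "A = (\<lambda>k. {k'\<in>{1..n}. k' \<noteq> k \<and> pw P k k' < 1/2})"
  have pij: "pw P i j < 1/2" using pw_compl[OF P ij(2,1)] ij p by auto
  have sub: "insert j (A j) \<subseteq> A i"
  proof
    fix k assume k: "k \<in> insert j (A j)"
    show "k \<in> A i"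
    proof (cases "k = j")
      case True then show ?thesis using pij ij unfolding A_def by auto
    next
      case False
      then have k1: "k \<in> {1..n}" "k \<noteq> j" "pw P j k < 1/2" using k unfolding A_def by auto
      have pkj: "pw P k j > 1/2" using pw_compl[OF P ij(2) k1(1)] k1 by auto
      have ki: "k \<noteq> i" using pkj pij by auto
      have tr: "\<forall>a\<in>{1..n}. \<forall>b\<in>{1..n}. \<forall>c\<in>{1..n}. pw P a b \<ge> 1/2 \<and> pw P b c \<ge> 1/2 \<longrightarrow> pw P a c \<ge> 1/2"
        using sst unfolding SST_def by blast
      have "pw P k i \<ge> 1/2" using tr k1(1) ij(2) ij(1) pkj p by (meson less_eq_real_def)
      moreover have "pw P k i \<noteq> 1/2" using SST_ne[OF sst k1(1) ij(1) ki] .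
      ultimately have "pw P k i > 1/2" by auto
      then have "pw P i k < 1/2" using pw_compl[OF P k1(1) ij(1) ki] by auto
      then show ?thesis using k1 ki unfolding A_def by auto
    qed
  qed
  have "j \<notin> A j" unfolding A_def by auto
  then have "card (A j) < card (A i)"
    using card_mono[OF _ sub] by (auto simp: A_def)
  then show ?thesis using ij unfolding sigma_star_def A_def by auto
qed

lemma star_agree:
  assumes sst: "SST n P" and ij: "i \<in> {1..n}" "j \<in> {1..n}" "i \<noteq> j"
  shows "sigma_star n P i < sigma_star n P j \<longleftrightarrow> pw P i j > 1/2"
proof
  assume "pw P i j > 1/2"
  then show "sigma_star n P i < sigma_star n P j" using star_mono[OF sst ij(2,1)] ij by auto
next
  have P: "set_pmf P \<subseteq> perms n" using sst unfolding SST_def by auto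
  assume a: "sigma_star n P i < sigma_star n P j"
  show "pw P i j > 1/2"
  proof (rule ccontr)
    assume "\<not> pw P i j > 1/2"
    then have "pw P i j < 1/2" using SST_ne[OF sst ij] by auto
    then have "pw P j i > 1/2" using pw_compl[OF P ij] by auto
    then show False using star_mono[OF sst ij(1,2)] a ij by auto
  qed
qed

lemma Pairs_mem: "p \<in> Pairs n \<Longrightarrow> fst p \<in> {1..n} \<and> snd p \<in> {1..n} \<and> fst p < snd p"
  unfolding Pairs_def by auto

lemma Pairs_ne: "n \<ge> 2 \<Longrightarrow> Pairs n \<noteq> {}"
proof -
  assume "n \<ge> 2"
  then have "(1,2) \<in> Pairs n" unfolding Pairs_def by auto
  then show ?thesis by auto
qed

lemma point_bound:
  assumes P: "set_pmf P \<subseteq> perms n" and n2: "n \<ge> 2"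
    and \<sigma>: "\<sigma> \<in> perms n" and \<sigma>s: "\<sigma>s \<in> perms n"
    and agree: "\<And>i j. i \<in> {1..n} \<Longrightarrow> j \<in> {1..n} \<Longrightarrow> i < j \<Longrightarrow> (\<sigma>s i < \<sigma>s j \<longleftrightarrow> pw P i j > 1/2)"
    and Hb: "\<And>i j. i \<in> {1..n} \<Longrightarrow> j \<in> {1..n} \<Longrightarrow> i < j \<Longrightarrow> H \<le> \<bar>pw P i j - 1/2\<bar>"
    and H: "0 < H"
  shows "measure_pmf.expectation P (\<lambda>\<tau>. dtau n \<sigma>s \<tau>) \<le> measure_pmf.expectation P (\<lambda>\<tau>. dtau n \<sigma> \<tau>)"
    and "measure_pmf.expectation P (\<lambda>\<tau>. exp (- (ln (1+2*H) / card (Pairs n)) * (dtau n \<sigma> \<tau> - dtau n \<sigma>s \<tau>)))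
         \<le> 1 - (H / card (Pairs n)) * (measure_pmf.expectation P (\<lambda>\<tau>. dtau n \<sigma> \<tau>) - measure_pmf.expectation P (\<lambda>\<tau>. dtau n \<sigma>s \<tau>))"
proof -
  define M where "M = real (card (Pairs n))"
  define \<mu> where "\<mu> = ln (1+2*H)"
  define W where "W = (\<lambda>p \<tau>. I2 \<sigma> \<tau> p - I2 \<sigma>s \<tau> p)"
  have fin: "finite (set_pmf P)" by (rule finite_subset[OF P finite_perms])
  note int = integrable_measure_pmf_finite[OF fin]
  have Mpos: "M > 0" unfolding M_def using Pairs_ne[OF n2] by (simp add: card_gt_0_iff)
  have diff: "dtau n \<sigma> \<tau> - dtau n \<sigma>s \<tau> = (\<Sum>p\<in>Pairs n. W p \<tau>)" for \<tau>
    unfolding dtau_Pairs W_def by (simp add: sum_subtractf)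
  have pb: "0 \<le> measure_pmf.expectation P (W p)"
      "measure_pmf.expectation P (\<lambda>\<tau>. exp (- \<mu> * W p \<tau>)) \<le> 1 - H * measure_pmf.expectation P (W p)"
    if "p \<in> Pairs n" for p
  proof -
    obtain i j where p: "p = (i,j)" by force
    have ij: "i \<in> {1..n}" "j \<in> {1..n}" "i < j" using Pairs_mem[OF that] p by auto
    show "0 \<le> measure_pmf.expectation P (W p)"
      "measure_pmf.expectation P (\<lambda>\<tau>. exp (- \<mu> * W p \<tau>)) \<le> 1 - H * measure_pmf.expectation P (W p)"
      using pair_bound[OF P ij \<sigma> \<sigma>s agree[OF ij] H Hb[OF ij]] unfolding p W_def \<mu>_def by auto
  qed
  have ED: "measure_pmf.expectation P (\<lambda>\<tau>. dtau n \<sigma> \<tau>) - measure_pmf.expectation P (\<lambda>\<tau>. dtau n \<sigma>s \<tau>)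
      = (\<Sum>p\<in>Pairs n. measure_pmf.expectation P (W p))"
  proof -
    have "measure_pmf.expectation P (\<lambda>\<tau>. dtau n \<sigma> \<tau>) - measure_pmf.expectation P (\<lambda>\<tau>. dtau n \<sigma>s \<tau>)
        = measure_pmf.expectation P (\<lambda>\<tau>. dtau n \<sigma> \<tau> - dtau n \<sigma>s \<tau>)"
      by (rule Bochner_Integration.integral_diff[symmetric]) (auto intro: int)
    also have "\<dots> = measure_pmf.expectation P (\<lambda>\<tau>. \<Sum>p\<in>Pairs n. W p \<tau>)" by (simp add: diff)
    also have "\<dots> = (\<Sum>p\<in>Pairs n. measure_pmf.expectation P (W p))"
      by (rule Bochner_Integration.integral_sum) (auto intro: int)
    finally show ?thesis .
  qed
  show "measure_pmf.expectation P (\<lambda>\<tau>. dtau n \<sigma>s \<tau>) \<le> measure_pmf.expectation P (\<lambda>\<tau>. dtau n \<sigma> \<tau>)"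
    using ED pb(1) sum_nonneg[of "Pairs n" "\<lambda>p. measure_pmf.expectation P (W p)"] by auto
  have jensen: "exp (- (\<mu> / M) * (\<Sum>p\<in>Pairs n. W p \<tau>)) \<le> (\<Sum>p\<in>Pairs n. (1/M) * exp (- \<mu> * W p \<tau>))" for \<tau>
  proof -
    have cv: "convex_on UNIV exp" using convex_on_exp[of 1] by simp
    have "exp (\<Sum>p\<in>Pairs n. (1/M) *\<^sub>R (- \<mu> * W p \<tau>)) \<le> (\<Sum>p\<in>Pairs n. (1/M) * exp (- \<mu> * W p \<tau>))"
      by (rule convex_on_sum[OF finite_Pairs Pairs_ne[OF n2] cv]) (use Mpos in \<open>auto simp: M_def\<close>)
    moreover have "(\<Sum>p\<in>Pairs n. (1/M) *\<^sub>R (- \<mu> * W p \<tau>)) = - (\<mu> / M) * (\<Sum>p\<in>Pairs n. W p \<tau>)"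
      by (simp add: sum_distrib_left)
    ultimately show ?thesis by simp
  qed
  have "measure_pmf.expectation P (\<lambda>\<tau>. exp (- (\<mu> / M) * (dtau n \<sigma> \<tau> - dtau n \<sigma>s \<tau>)))
      \<le> measure_pmf.expectation P (\<lambda>\<tau>. \<Sum>p\<in>Pairs n. (1/M) * exp (- \<mu> * W p \<tau>))"
    unfolding diff by (rule integral_mono[OF int int jensen])
  also have "\<dots> = (\<Sum>p\<in>Pairs n. (1/M) * measure_pmf.expectation P (\<lambda>\<tau>. exp (- \<mu> * W p \<tau>)))"
    by (subst Bochner_Integration.integral_sum) (auto intro: int)
  also have "\<dots> \<le> (\<Sum>p\<in>Pairs n. (1/M) * (1 - H * measure_pmf.expectation P (W p)))"
    by (intro sum_mono mult_left_mono pb(2)) (use Mpos in auto)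
  also have "\<dots> = (1/M) * card (Pairs n) - (H/M) * (\<Sum>p\<in>Pairs n. measure_pmf.expectation P (W p))"
    by (simp add: sum_distrib_left sum_subtractf algebra_simps)
  also have "\<dots> = 1 - (H/M) * (measure_pmf.expectation P (\<lambda>\<tau>. dtau n \<sigma> \<tau>) - measure_pmf.expectation P (\<lambda>\<tau>. dtau n \<sigma>s \<tau>))"
    using Mpos ED Pairs_ne[OF n2] by (simp add: M_def)
  finally show "measure_pmf.expectation P (\<lambda>\<tau>. exp (- (ln (1+2*H) / card (Pairs n)) * (dtau n \<sigma> \<tau> - dtau n \<sigma>s \<tau>)))
         \<le> 1 - (H / card (Pairs n)) * (measure_pmf.expectation P (\<lambda>\<tau>. dtau n \<sigma> \<tau>) - measure_pmf.expectation P (\<lambda>\<tau>. dtau n \<sigma>s \<tau>))"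
    unfolding M_def \<mu>_def .
qed

lemma meas4:
  fixes h :: "nat \<Rightarrow> nat \<Rightarrow> nat \<Rightarrow> nat \<Rightarrow> real"
  assumes "a \<in> M \<rightarrow>\<^sub>M count_space UNIV" "b \<in> M \<rightarrow>\<^sub>M count_space UNIV"
    "c \<in> M \<rightarrow>\<^sub>M count_space UNIV" "d \<in> M \<rightarrow>\<^sub>M count_space UNIV"
  shows "(\<lambda>z. h (a z) (b z) (c z) (d z)) \<in> borel_measurable M"
proof -
  have "(\<lambda>z. h k1 k2 k3 (d z)) \<in> borel_measurable M" for k1 k2 k3
    by (rule measurable_compose[OF assms(4)]) simp
  then have "(\<lambda>z. h k1 k2 (c z) (d z)) \<in> borel_measurable M" for k1 k2
    using measurable_compose_countable[where f="\<lambda>k z. h k1 k2 k (d z)", OF _ assms(3)] by simp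
  then have "(\<lambda>z. h k1 (b z) (c z) (d z)) \<in> borel_measurable M" for k1
    using measurable_compose_countable[where f="\<lambda>k z. h k1 k (c z) (d z)", OF _ assms(2)] by simp
  then show ?thesis
    using measurable_compose_countable[where f="\<lambda>k z. h k (b z) (c z) (d z)", OF _ assms(1)] by simp
qed

lemma dtau_meas:
  assumes "\<And>i. (\<lambda>z. f z i) \<in> M \<rightarrow>\<^sub>M count_space UNIV" "\<And>i. (\<lambda>z. g z i) \<in> M \<rightarrow>\<^sub>M count_space UNIV"
  shows "(\<lambda>z. dtau n (f z) (g z)) \<in> borel_measurable M"
  unfolding dtau_def
  by (intro borel_measurable_sum meas4[where h="\<lambda>a b c d. if (int a - int b) * (int c - int d) < 0 then 1 else 0"] assms)

lemma eval_meas: "s \<in> M \<rightarrow>\<^sub>M count_space UNIV \<Longrightarrow> (\<lambda>x. s x i) \<in> M \<rightarrow>\<^sub>M count_space UNIV"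
  by (rule measurable_compose[where f=s and g="\<lambda>\<sigma>. \<sigma> i"]) auto

locale setting =
  fixes Mx :: "'x measure" and D :: "('x \<times> (nat \<Rightarrow> nat)) measure" and K :: "'x \<Rightarrow> (nat \<Rightarrow> nat) pmf"
    and n :: nat
  assumes D_prob: "prob_space D"
    and D_sets: "sets D = sets (Mx \<Otimes>\<^sub>M count_space UNIV)"
    and K_meas: "\<And>\<sigma>. (\<lambda>x. pmf (K x) \<sigma>) \<in> borel_measurable Mx"
    and K_cond: "\<And>A \<sigma>. A \<in> sets Mx \<Longrightarrow>
        emeasure D (A \<times> {\<sigma>}) = (\<integral>\<^sup>+ x\<in>A. ennreal (pmf (K x) \<sigma>) \<partial>(distr D Mx fst))"
    and K_perm: "\<And>x. x \<in> space Mx \<Longrightarrow> set_pmf (K x) \<subseteq> perms n"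
begin

definition "m = distr D Mx fst"

lemma space_D: "space D = space Mx \<times> UNIV"
  using sets_eq_imp_space_eq[OF D_sets] by (simp add: space_pair_measure)

lemma fst_meas[measurable]: "fst \<in> D \<rightarrow>\<^sub>M Mx"
  using measurable_fst[of Mx "count_space UNIV"] measurable_cong_sets[OF D_sets refl] by blast

lemma snd_meas[measurable]: "snd \<in> D \<rightarrow>\<^sub>M count_space UNIV"
  using measurable_snd[of Mx "count_space UNIV"] measurable_cong_sets[OF D_sets refl] by blast

lemma snd_i_meas: "(\<lambda>z. snd z i) \<in> D \<rightarrow>\<^sub>M count_space UNIV"
  by (rule eval_meas[OF snd_meas])

lemma sets_rect: "A \<in> sets Mx \<Longrightarrow> A \<times> {\<tau>} \<in> sets D"
  unfolding D_sets by (intro pair_measureI) auto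

lemma snd_eq_sets: "{z \<in> space D. snd z = \<tau>} \<in> sets D"
  using measurable_sets[OF snd_meas, of "{\<tau>}"] by (simp add: vimage_def Int_def conj_commute)

lemma m_prob: "prob_space m"
  unfolding m_def by (rule prob_space.prob_space_distr[OF D_prob fst_meas])

lemma sets_m[simp]: "sets m = sets Mx" and space_m[simp]: "space m = space Mx"
  unfolding m_def by auto

lemma meas_m[simp]: "measurable m N = measurable Mx N"
  by (rule measurable_cong_sets) auto

lemma disint_one:
  assumes g: "g \<in> borel_measurable Mx"
  shows "(\<integral>\<^sup>+ z. g (fst z) * indicator {z. snd z = \<tau>} z \<partial>D) = (\<integral>\<^sup>+ x. g x * ennreal (pmf (K x) \<tau>) \<partial>m)"
proof -
  define N1 where "N1 = distr (density D (indicator {z. snd z = \<tau>})) Mx fst"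
  define N2 where "N2 = density m (\<lambda>x. ennreal (pmf (K x) \<tau>))"
  have ind_meas: "indicator {z. snd z = \<tau>} \<in> (borel_measurable D :: ('x \<times> _ \<Rightarrow> ennreal) set)"
    by (rule borel_measurable_indicator') (use snd_eq_sets in auto)
  have fstd: "fst \<in> density D (indicator {z. snd z = \<tau>}) \<rightarrow>\<^sub>M Mx" by simp
  have "N1 = N2"
  proof (rule measure_eqI)
    show "sets N1 = sets N2" unfolding N1_def N2_def by simp
  next
    fix A assume "A \<in> sets N1"
    then have A: "A \<in> sets Mx" by (simp add: N1_def)
    have "emeasure N1 A = emeasure (density D (indicator {z. snd z = \<tau>})) (fst -` A \<inter> space D)"
      unfolding N1_def using A by (subst emeasure_distr[OF fstd]) auto
    also have "\<dots> = (\<integral>\<^sup>+ z. indicator {z. snd z = \<tau>} z * indicator (fst -` A \<inter> space D) z \<partial>D)"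
      by (rule emeasure_density[OF ind_meas]) (use A measurable_sets[OF fst_meas A] in auto)
    also have "\<dots> = (\<integral>\<^sup>+ z. indicator (A \<times> {\<tau>}) z \<partial>D)"
      using sets.sets_into_space[OF A] by (intro nn_integral_cong) (auto simp: space_D split: split_indicator)
    also have "\<dots> = emeasure D (A \<times> {\<tau>})" using sets_rect[OF A] by simp
    also have "\<dots> = emeasure N2 A"
      unfolding N2_def K_cond[OF A] m_def
      by (subst emeasure_density) (auto intro: A K_meas simp: mult.commute)
    finally show "emeasure N1 A = emeasure N2 A" .
  qed
  have gf: "(\<lambda>z. g (fst z)) \<in> borel_measurable D" by (rule measurable_compose[OF fst_meas g])
  have "(\<integral>\<^sup>+ z. g (fst z) * indicator {z. snd z = \<tau>} z \<partial>D) = (\<integral>\<^sup>+ z. g (fst z) \<partial>(density D (indicator {z. snd z = \<tau>})))"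
    by (subst nn_integral_density[OF ind_meas]) (auto simp: mult.commute intro: gf)
  also have "\<dots> = integral\<^sup>N N1 g"
    unfolding N1_def by (subst nn_integral_distr[OF fstd]) (auto intro: g)
  also have "\<dots> = integral\<^sup>N N2 g" using \<open>N1 = N2\<close> by simp
  also have "\<dots> = (\<integral>\<^sup>+ x. g x * ennreal (pmf (K x) \<tau>) \<partial>m)"
    unfolding N2_def by (subst nn_integral_density) (auto simp: mult.commute intro: g K_meas)
  finally show ?thesis .
qed

lemma ind_meas: "(\<lambda>z. indicator {z. snd z = \<tau>} z :: ennreal) \<in> borel_measurable D"
  by (rule borel_measurable_indicator') (use snd_eq_sets in auto)

lemma sum_ind:
  assumes "snd z \<in> perms n"
  shows "(\<Sum>\<tau>\<in>perms n. f \<tau> * indicator {z. snd z = \<tau>} z) = (f (snd z) :: ennreal)"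
proof -
  have "(\<Sum>\<tau>\<in>perms n. f \<tau> * indicator {z. snd z = \<tau>} z) = (\<Sum>\<tau>\<in>perms n. if snd z = \<tau> then f \<tau> else 0)"
    by (intro sum.cong) (auto split: split_indicator)
  also have "\<dots> = f (snd z)" using assms by (simp add: sum.delta)
  finally show ?thesis .
qed

lemma AE_perm: "AE z in D. snd z \<in> perms n"
proof -
  interpret D: prob_space D by (rule D_prob)
  interpret m: prob_space m by (rule m_prob)
  define S where "S = {z \<in> space D. snd z \<in> perms n}"
  have S: "S \<in> sets D"
    unfolding S_def using measurable_sets[OF snd_meas, of "perms n"] by (simp add: vimage_def Int_def conj_commute)
  have "emeasure D S = (\<integral>\<^sup>+ z. indicator S z \<partial>D)" using S by simp
  also have "\<dots> = (\<integral>\<^sup>+ z. (\<Sum>\<tau>\<in>perms n. 1 * indicator {z. snd z = \<tau>} z) \<partial>D)"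
  proof (intro nn_integral_cong)
    fix z assume "z \<in> space D"
    then show "indicator S z = (\<Sum>\<tau>\<in>perms n. 1 * indicator {z. snd z = \<tau>} z :: ennreal)"
      using sum_ind[of z "\<lambda>_. 1"] unfolding S_def
      by (cases "snd z \<in> perms n") (auto simp: indicator_def)
  qed
  also have "\<dots> = (\<Sum>\<tau>\<in>perms n. \<integral>\<^sup>+ z. 1 * indicator {z. snd z = \<tau>} z \<partial>D)"
    by (rule nn_integral_sum) (auto intro: ind_meas)
  also have "\<dots> = (\<Sum>\<tau>\<in>perms n. \<integral>\<^sup>+ x. 1 * ennreal (pmf (K x) \<tau>) \<partial>m)"
    using disint_one[of "\<lambda>_. 1"] by simp
  also have "\<dots> = (\<integral>\<^sup>+ x. (\<Sum>\<tau>\<in>perms n. 1 * ennreal (pmf (K x) \<tau>)) \<partial>m)"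
    by (rule nn_integral_sum[symmetric]) (auto intro: K_meas)
  also have "\<dots> = (\<integral>\<^sup>+ x. 1 \<partial>m)"
    by (intro nn_integral_cong) (auto simp: sum_pmf_eq_1[OF finite_perms K_perm])
  also have "\<dots> = 1" using m.emeasure_space_1 by simp
  finally have "D.prob S = 1" by (simp add: D.emeasure_eq_measure)
  then show ?thesis using D.AE_in_set_eq_1[OF S] unfolding S_def by auto
qed

lemma disint_nn:
  fixes F :: "'x \<Rightarrow> (nat \<Rightarrow> nat) \<Rightarrow> real"
  assumes Fnn: "\<And>x \<tau>. 0 \<le> F x \<tau>" and Fm: "\<And>\<tau>. (\<lambda>x. F x \<tau>) \<in> borel_measurable Mx"
  shows "(\<integral>\<^sup>+ z. ennreal (F (fst z) (snd z)) \<partial>D) = (\<integral>\<^sup>+ x. ennreal (\<Sum>\<tau>\<in>perms n. pmf (K x) \<tau> * F x \<tau>) \<partial>m)"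
proof -
  have "(\<integral>\<^sup>+ z. ennreal (F (fst z) (snd z)) \<partial>D)
      = (\<integral>\<^sup>+ z. (\<Sum>\<tau>\<in>perms n. ennreal (F (fst z) \<tau>) * indicator {z. snd z = \<tau>} z) \<partial>D)"
  proof (rule nn_integral_cong_AE)
    show "AE z in D. ennreal (F (fst z) (snd z)) = (\<Sum>\<tau>\<in>perms n. ennreal (F (fst z) \<tau>) * indicator {z. snd z = \<tau>} z)"
      using AE_perm by eventually_elim (rule sum_ind[symmetric])
  qed
  also have "\<dots> = (\<Sum>\<tau>\<in>perms n. \<integral>\<^sup>+ z. ennreal (F (fst z) \<tau>) * indicator {z. snd z = \<tau>} z \<partial>D)"
    by (rule nn_integral_sum, rule borel_measurable_times_ennreal, rule measurable_compose[OF measurable_compose[OF fst_meas Fm] measurable_ennreal], rule ind_meas)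
  also have "\<dots> = (\<Sum>\<tau>\<in>perms n. \<integral>\<^sup>+ x. ennreal (F x \<tau>) * ennreal (pmf (K x) \<tau>) \<partial>m)"
    by (intro sum.cong refl disint_one measurable_compose[OF Fm measurable_ennreal])
  also have "\<dots> = (\<integral>\<^sup>+ x. (\<Sum>\<tau>\<in>perms n. ennreal (F x \<tau>) * ennreal (pmf (K x) \<tau>)) \<partial>m)"
    by (rule nn_integral_sum[symmetric]) (auto intro!: borel_measurable_times_ennreal measurable_compose[OF Fm measurable_ennreal] measurable_compose[OF K_meas measurable_ennreal])
  also have "\<dots> = (\<integral>\<^sup>+ x. ennreal (\<Sum>\<tau>\<in>perms n. pmf (K x) \<tau> * F x \<tau>) \<partial>m)"
    by (intro nn_integral_cong) (simp add: ennreal_mult[symmetric] Fnn mult.commute)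
  finally show ?thesis .
qed

end

lemma dtau_nonneg: "0 \<le> dtau n \<sigma> \<tau>"
  unfolding dtau_def by (intro sum_nonneg) auto

lemma dtau_le: "dtau n \<sigma> \<tau> \<le> card (Pairs n)"
  unfolding dtau_Pairs using sum_bounded_above[of "Pairs n" "I2 \<sigma> \<tau>" 1] by (auto simp: I2_def)

lemma rules_meas: "s \<in> rules Mx n \<Longrightarrow> s \<in> Mx \<rightarrow>\<^sub>M count_space UNIV"
  unfolding rules_def by auto

lemma rules_perm: "s \<in> rules Mx n \<Longrightarrow> x \<in> space Mx \<Longrightarrow> s x \<in> perms n"
  unfolding rules_def by auto

context setting
begin

lemma int_bdd:
  fixes f :: "'x \<Rightarrow> real"
  assumes "f \<in> borel_measurable Mx" "\<And>x. x \<in> space Mx \<Longrightarrow> \<bar>f x\<bar> \<le> B"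
  shows "integrable m f"
proof -
  interpret m: prob_space m by (rule m_prob)
  show ?thesis by (rule m.integrable_const_bound[where B=B]) (use assms in auto)
qed

lemma disint_real:
  fixes F :: "'x \<Rightarrow> (nat \<Rightarrow> nat) \<Rightarrow> real"
  assumes Fnn: "\<And>x \<tau>. 0 \<le> F x \<tau>" and Fm: "\<And>\<tau>. (\<lambda>x. F x \<tau>) \<in> borel_measurable Mx"
    and FD: "(\<lambda>z. F (fst z) (snd z)) \<in> borel_measurable D"
  shows "(\<integral> z. F (fst z) (snd z) \<partial>D) = (\<integral> x. (\<Sum>\<tau>\<in>perms n. pmf (K x) \<tau> * F x \<tau>) \<partial>m)"
proof -
  have sm: "(\<lambda>x. \<Sum>\<tau>\<in>perms n. pmf (K x) \<tau> * F x \<tau>) \<in> borel_measurable m"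
    using K_meas Fm by auto
  show ?thesis
    apply (subst integral_eq_nn_integral[OF FD])
     apply (simp add: Fnn)
    apply (subst integral_eq_nn_integral[OF sm])
     apply (simp add: Fnn sum_nonneg)
    apply (subst disint_nn[OF Fnn Fm], rule refl)
    done
qed

definition e :: "('x \<Rightarrow> nat \<Rightarrow> nat) \<Rightarrow> 'x \<Rightarrow> real" where
  "e s x = (\<Sum>\<tau>\<in>perms n. pmf (K x) \<tau> * dtau n (s x) \<tau>)"

lemma dtau_meas_x: "s \<in> rules Mx n \<Longrightarrow> (\<lambda>x. dtau n (s x) \<tau>) \<in> borel_measurable Mx"
  by (rule dtau_meas[where f=s and g="\<lambda>_. \<tau>"]) (auto intro: eval_meas rules_meas)

lemma dtau_meas_D: "s \<in> rules Mx n \<Longrightarrow> (\<lambda>z. dtau n (s (fst z)) (snd z)) \<in> borel_measurable D"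
  by (rule dtau_meas[where f="\<lambda>z. s (fst z)" and g=snd])
     (auto intro: eval_meas measurable_compose[OF fst_meas rules_meas] snd_i_meas)

lemma e_meas: "s \<in> rules Mx n \<Longrightarrow> e s \<in> borel_measurable Mx"
  unfolding e_def using K_meas dtau_meas_x by auto

lemma e_bdd: "\<bar>e s x\<bar> \<le> card (perms n) * card (Pairs n)"
proof -
  have "\<bar>e s x\<bar> = e s x" unfolding e_def by (intro abs_of_nonneg sum_nonneg mult_nonneg_nonneg dtau_nonneg) auto
  also have "\<dots> \<le> (\<Sum>\<tau>\<in>perms n. 1 * real (card (Pairs n)))"
    unfolding e_def by (intro sum_mono mult_mono dtau_le pmf_le_1) (auto intro: dtau_nonneg)
  finally show ?thesis by simp
qed

lemma e_int: "s \<in> rules Mx n \<Longrightarrow> integrable m (e s)"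
  by (rule int_bdd[OF e_meas e_bdd])

lemma risk_e: "s \<in> rules Mx n \<Longrightarrow> risk n D s = (\<integral>x. e s x \<partial>m)"
  unfolding risk_def e_def
  by (rule disint_real[where F="\<lambda>x \<tau>. dtau n (s x) \<tau>"]) (auto intro: dtau_nonneg dtau_meas_x dtau_meas_D)

lemma expect_sum:
  assumes "x \<in> space Mx"
  shows "measure_pmf.expectation (K x) f = (\<Sum>\<tau>\<in>perms n. pmf (K x) \<tau> * f \<tau>)"
  using integral_measure_pmf[OF finite_perms, of "K x" f] K_perm[OF assms] by auto

end

locale setting2 = setting Mx D K n for Mx :: "'x measure" and D K n +
  fixes H :: real and ss :: "'x \<Rightarrow> nat \<Rightarrow> nat"
  assumes n2: "n \<ge> 2" and H_pos: "H > 0"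
    and Hb: "\<And>x i j. x \<in> space Mx \<Longrightarrow> i \<in> {1..n} \<Longrightarrow> j \<in> {1..n} \<Longrightarrow> i < j \<Longrightarrow> H \<le> \<bar>pw (K x) i j - 1/2\<bar>"
    and SST: "\<And>x. x \<in> space Mx \<Longrightarrow> SST n (K x)"
    and ss_rule: "ss \<in> rules Mx n"
    and ss_eq: "\<And>x. x \<in> space Mx \<Longrightarrow> ss x = sigma_star n (K x)"
begin

lemma agree: "x \<in> space Mx \<Longrightarrow> i \<in> {1..n} \<Longrightarrow> j \<in> {1..n} \<Longrightarrow> i < j \<Longrightarrow> (ss x i < ss x j \<longleftrightarrow> pw (K x) i j > 1/2)"
  using star_agree[OF SST] ss_eq by auto

lemma pb:
  assumes "x \<in> space Mx" "s \<in> rules Mx n"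
  shows "measure_pmf.expectation (K x) (\<lambda>\<tau>. dtau n (ss x) \<tau>) \<le> measure_pmf.expectation (K x) (\<lambda>\<tau>. dtau n (s x) \<tau>)"
    and "measure_pmf.expectation (K x) (\<lambda>\<tau>. exp (- (ln (1+2*H) / card (Pairs n)) * (dtau n (s x) \<tau> - dtau n (ss x) \<tau>)))
         \<le> 1 - (H / card (Pairs n)) * (measure_pmf.expectation (K x) (\<lambda>\<tau>. dtau n (s x) \<tau>) - measure_pmf.expectation (K x) (\<lambda>\<tau>. dtau n (ss x) \<tau>))"
  using point_bound[OF K_perm[OF assms(1)] n2 rules_perm[OF assms(2,1)] rules_perm[OF ss_rule assms(1)]
      agree[OF assms(1)] Hb[OF assms(1)] H_pos] by auto

lemma optimal: "s \<in> rules Mx n \<Longrightarrow> risk n D ss \<le> risk n D s"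
  unfolding risk_e[OF ss_rule] risk_e
  by (rule integral_mono[OF e_int[OF ss_rule] e_int]) (auto simp: e_def expect_sum[symmetric] intro: pb(1))

lemma risk_star_eq: "risk_star n Mx D = risk n D ss"
  unfolding risk_star_def using optimal ss_rule by (intro cInf_eq_minimum) auto

definition "lam = ln (1+2*H) / card (Pairs n)"
definition "Z s z = dtau n (s (fst z)) (snd z) - dtau n (ss (fst z)) (snd z)"

lemma lam_pos: "lam > 0"
  unfolding lam_def using H_pos Pairs_ne[OF n2] by (auto intro!: divide_pos_pos simp: card_gt_0_iff)

lemma Z_meas: "s \<in> rules Mx n \<Longrightarrow> Z s \<in> borel_measurable D"
  unfolding Z_def using dtau_meas_D ss_rule by auto

lemma Z_bdd: "\<bar>Z s z\<bar> \<le> card (Pairs n)"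
  unfolding Z_def using dtau_le[of n "s (fst z)" "snd z"] dtau_nonneg[of n "s (fst z)" "snd z"]
    dtau_le[of n "ss (fst z)" "snd z"] dtau_nonneg[of n "ss (fst z)" "snd z"] by linarith

lemma mgf:
  assumes s: "s \<in> rules Mx n"
  shows "(\<integral>z. exp (- lam * Z s z) \<partial>D) \<le> 1 - (H / card (Pairs n)) * (risk n D s - risk n D ss)"
proof -
  interpret mm: prob_space m by (rule m_prob)
  define F where "F x \<tau> = exp (- lam * (dtau n (s x) \<tau> - dtau n (ss x) \<tau>))" for x \<tau>
  define B where "B = real (card (perms n)) * exp (lam * card (Pairs n))"
  have Fm: "(\<lambda>x. F x \<tau>) \<in> borel_measurable Mx" for \<tau>
    unfolding F_def using dtau_meas_x[OF s] dtau_meas_x[OF ss_rule] by auto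
  have FD: "(\<lambda>z. F (fst z) (snd z)) \<in> borel_measurable D"
    using Z_meas[OF s] unfolding F_def Z_def by auto
  have "(\<integral>z. exp (- lam * Z s z) \<partial>D) = (\<integral> x. (\<Sum>\<tau>\<in>perms n. pmf (K x) \<tau> * F x \<tau>) \<partial>m)"
    unfolding Z_def using disint_real[of F, OF _ Fm FD] unfolding F_def by simp
  also have "\<dots> \<le> (\<integral> x. 1 - (H / card (Pairs n)) * (e s x - e ss x) \<partial>m)"
  proof (rule integral_mono)
    show "integrable m (\<lambda>x. \<Sum>\<tau>\<in>perms n. pmf (K x) \<tau> * F x \<tau>)"
    proof (rule int_bdd[where B=B])
      show "(\<lambda>x. \<Sum>\<tau>\<in>perms n. pmf (K x) \<tau> * F x \<tau>) \<in> borel_measurable Mx" using K_meas Fm by auto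
      fix x
      have "\<bar>\<Sum>\<tau>\<in>perms n. pmf (K x) \<tau> * F x \<tau>\<bar> = (\<Sum>\<tau>\<in>perms n. pmf (K x) \<tau> * F x \<tau>)"
        unfolding F_def by (intro abs_of_nonneg sum_nonneg) auto
      also have "\<dots> \<le> (\<Sum>\<tau>\<in>perms n. 1 * exp (lam * card (Pairs n)))"
      proof (intro sum_mono mult_mono pmf_le_1)
        fix \<tau>
        have "dtau n (ss x) \<tau> - dtau n (s x) \<tau> \<le> card (Pairs n)"
          using dtau_le[of n "ss x" \<tau>] dtau_nonneg[of n "s x" \<tau>] by linarith
        then have "lam * (dtau n (ss x) \<tau> - dtau n (s x) \<tau>) \<le> lam * card (Pairs n)"
          using lam_pos by (intro mult_left_mono) auto
        then have "- lam * (dtau n (s x) \<tau> - dtau n (ss x) \<tau>) \<le> lam * card (Pairs n)"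
          by (simp add: algebra_simps)
        then show "F x \<tau> \<le> exp (lam * card (Pairs n))" unfolding F_def by simp
      qed (auto simp: F_def)
      finally show "\<bar>\<Sum>\<tau>\<in>perms n. pmf (K x) \<tau> * F x \<tau>\<bar> \<le> B" unfolding B_def by simp
    qed
    show "integrable m (\<lambda>x. 1 - (H / card (Pairs n)) * (e s x - e ss x))"
      using e_int[OF s] e_int[OF ss_rule]
      by (intro Bochner_Integration.integrable_diff mm.integrable_const integrable_mult_right) auto
    fix x assume x: "x \<in> space m"
    then show "(\<Sum>\<tau>\<in>perms n. pmf (K x) \<tau> * F x \<tau>) \<le> 1 - (H / card (Pairs n)) * (e s x - e ss x)"
      using pb(2)[OF _ s, of x] unfolding e_def F_def lam_def by (simp add: expect_sum)
  qed
  also have "\<dots> = 1 - (H / card (Pairs n)) * (risk n D s - risk n D ss)"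
    using e_int[OF s] e_int[OF ss_rule] m_prob unfolding risk_e[OF s] risk_e[OF ss_rule]
    using mm.prob_space by simp
  finally show ?thesis .
qed

end

context setting2
begin

lemma final:
  fixes N :: nat and S0 :: "('x \<Rightarrow> nat \<Rightarrow> nat) set" and \<delta> :: real
  assumes N1: "N \<ge> 1" and S0_sub: "S0 \<subseteq> rules Mx n" and S0_fin: "finite S0" and ss_in: "ss \<in> S0"
    and \<delta>: "0 < \<delta>" "\<delta> < 1"
  shows "measure (Pi\<^sub>M {..<N} (\<lambda>_. D))
           {\<omega> \<in> space (Pi\<^sub>M {..<N} (\<lambda>_. D)).
              \<forall>s\<in>S0. (\<forall>s'\<in>S0. emp_risk n N \<omega> s \<le> emp_risk n N \<omega> s') \<longrightarrow>
                 risk n D s - risk_star n Mx D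
                   \<le> (real (n * (n - 1)) / (2 * H)) * (ln (real (card S0) / \<delta>) / real N)}
         \<ge> 1 - \<delta>"
proof -
  define PM where "PM = Pi\<^sub>M {..<N} (\<lambda>_. D)"
  define b where "b = (real (n * (n - 1)) / (2 * H)) * (ln (real (card S0) / \<delta>) / real N)"
  define C where "C = real (card S0)"
  define Mp where "Mp = real (card (Pairs n))"
  define G where "G = {\<omega> \<in> space PM. \<forall>s\<in>S0. (\<forall>s'\<in>S0. emp_risk n N \<omega> s \<le> emp_risk n N \<omega> s') \<longrightarrow>
                 risk n D s - risk_star n Mx D \<le> b}"
  define A where "A s = {\<omega> \<in> space PM. \<forall>s'\<in>S0. emp_risk n N \<omega> s \<le> emp_risk n N \<omega> s'}" for s
  interpret P: prob_space PM unfolding PM_def by (rule prob_space_PiM) (rule D_prob)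
  interpret D: prob_space D by (rule D_prob)
  interpret PS: product_sigma_finite "\<lambda>_. D"
    unfolding product_sigma_finite_def using prob_space_imp_sigma_finite[OF D_prob] by simp
  have Mp_pos: "Mp > 0" unfolding Mp_def using Pairs_ne[OF n2] by (simp add: card_gt_0_iff)
  have "card S0 > 0" using S0_fin ss_in by (auto simp: card_gt_0_iff)
  then have C1: "C \<ge> 1" unfolding C_def by simp
  have rule: "s \<in> rules Mx n" if "s \<in> S0" for s using S0_sub that by auto
  have comp: "(\<lambda>\<omega>. f (\<omega> k)) \<in> borel_measurable PM" if "k \<in> {..<N}" "f \<in> borel_measurable D" for k and f :: "'x \<times> (nat \<Rightarrow> nat) \<Rightarrow> real"
  proof -
    have "(\<lambda>\<omega>. \<omega> k) \<in> PM \<rightarrow>\<^sub>M D" unfolding PM_def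
      using measurable_component_singleton[of k "{..<N}" "\<lambda>_. D"] that(1) by simp
    then show ?thesis using that(2) by (rule measurable_compose)
  qed
  have emp_meas: "(\<lambda>\<omega>. emp_risk n N \<omega> s) \<in> borel_measurable PM" if "s \<in> rules Mx n" for s
    unfolding emp_risk_def
    by (intro borel_measurable_times borel_measurable_const borel_measurable_sum
        comp dtau_meas_D[OF that]) auto
  have A_sets: "A s \<in> sets PM" if "s \<in> S0" for s
    unfolding A_def using S0_fin
    by (intro sets.sets_Collect_finite_All borel_measurable_le emp_meas rule that) auto
  have G_sets: "G \<in> sets PM"
    unfolding G_def using S0_fin
    by (intro sets.sets_Collect_finite_All sets.sets_Collect_imp sets.sets_Collect_const borel_measurable_le emp_meas rule) auto
  have chern: "P.prob (A s) \<le> (\<integral>z. exp (- lam * Z s z) \<partial>D) ^ N" if s: "s \<in> S0" for s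
  proof -
    define u where "u \<omega> = (\<Prod>k\<in>{..<N}. exp (- lam * Z s (\<omega> k)))" for \<omega>
    have Zm: "(\<lambda>z. exp (- lam * Z s z)) \<in> borel_measurable D" using Z_meas[OF rule[OF s]] by auto
    have Zb: "\<bar>exp (- lam * Z s z)\<bar> \<le> exp (lam * Mp)" for z
    proof -
      have "- lam * Z s z \<le> lam * Mp"
        using Z_bdd[of s z] lam_pos unfolding Mp_def
        by (metis abs_le_D2 minus_mult_commute mult_le_cancel_left_pos)
      then show ?thesis by simp
    qed
    have um: "u \<in> borel_measurable PM"
      unfolding u_def
      by (intro borel_measurable_prod comp Zm) auto
    have ub: "\<bar>u \<omega>\<bar> \<le> exp (lam * Mp) ^ N" for \<omega>
    proof -
      have "\<bar>u \<omega>\<bar> = (\<Prod>k\<in>{..<N}. \<bar>exp (- lam * Z s (\<omega> k))\<bar>)" unfolding u_def by (simp add: abs_prod)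
      also have "\<dots> \<le> (\<Prod>k\<in>{..<N}. exp (lam * Mp))" by (intro prod_mono) (use Zb in auto)
      finally show ?thesis by simp
    qed
    have uint: "integrable PM u" by (rule P.integrable_const_bound[where B="exp (lam * Mp) ^ N"]) (use ub um in auto)
    have sub: "indicator (A s) \<omega> \<le> u \<omega>" for \<omega>
    proof (cases "\<omega> \<in> A s")
      case True
      then have "emp_risk n N \<omega> s \<le> emp_risk n N \<omega> ss" unfolding A_def using ss_in by auto
      then have "(1 / real N) * (\<Sum>k<N. dtau n (s (fst (\<omega> k))) (snd (\<omega> k))) \<le> (1 / real N) * (\<Sum>k<N. dtau n (ss (fst (\<omega> k))) (snd (\<omega> k)))"
        unfolding emp_risk_def .
      then have "(\<Sum>k<N. dtau n (s (fst (\<omega> k))) (snd (\<omega> k))) \<le> (\<Sum>k<N. dtau n (ss (fst (\<omega> k))) (snd (\<omega> k)))"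
        using N1 by (simp add: divide_le_cancel)
      then have "(\<Sum>k<N. Z s (\<omega> k)) \<le> 0" unfolding Z_def by (simp add: sum_subtractf)
      then have "0 \<le> - lam * (\<Sum>k<N. Z s (\<omega> k))" using lam_pos by (simp add: mult_nonneg_nonpos less_imp_le)
      then have "1 \<le> exp (\<Sum>k<N. - lam * Z s (\<omega> k))" by (simp add: sum_distrib_left)
      then have "1 \<le> u \<omega>" unfolding u_def by (simp add: exp_sum)
      then show ?thesis using True by simp
    next
      case False then show ?thesis unfolding u_def by (simp add: prod_nonneg)
    qed
    have "P.prob (A s) = (\<integral>\<omega>. indicator (A s) \<omega> \<partial>PM)" using A_sets[OF s] by simp
    also have "\<dots> \<le> (\<integral>\<omega>. u \<omega> \<partial>PM)"
      by (rule integral_mono[OF _ uint sub]) (use A_sets[OF s] in \<open>auto simp: P.emeasure_eq_measure\<close>)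
    also have "\<dots> = (\<Prod>k\<in>{..<N}. \<integral>z. exp (- lam * Z s z) \<partial>D)"
      unfolding u_def PM_def
    proof (rule PS.product_integral_prod)
      show "integrable D (\<lambda>z. exp (- lam * Z s z))" for k
        by (rule D.integrable_const_bound[where B="exp (lam * Mp)", OF _ Zm]) (use Zb in auto)
    qed auto
    also have "\<dots> = (\<integral>z. exp (- lam * Z s z) \<partial>D) ^ N" by simp
    finally show ?thesis .
  qed
  have bad: "P.prob (A s) \<le> \<delta> / C" if s: "s \<in> S0" and sb: "risk n D s - risk_star n Mx D > b" for s
  proof -
    define \<epsilon> where "\<epsilon> = risk n D s - risk n D ss"
    have eps: "\<epsilon> > b" using sb unfolding \<epsilon>_def risk_star_eq .
    have b_eq: "b = (Mp / H) * (ln (C / \<delta>) / real N)"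
    proof -
      have "real (n * (n - 1)) = 2 * Mp" unfolding Mp_def
        by (subst card_Pairs[symmetric]) simp
      then show ?thesis unfolding b_def C_def by simp
    qed
    have I0: "0 \<le> (\<integral>z. exp (- lam * Z s z) \<partial>D)" by simp
    have "(\<integral>z. exp (- lam * Z s z) \<partial>D) \<le> 1 - (H / Mp) * \<epsilon>"
      using mgf[OF rule[OF s]] unfolding \<epsilon>_def Mp_def .
    also have "\<dots> \<le> exp (- ((H / Mp) * \<epsilon>))" using exp_ge_add_one_self[of "- ((H / Mp) * \<epsilon>)"] by simp
    finally have "(\<integral>z. exp (- lam * Z s z) \<partial>D) ^ N \<le> exp (- ((H / Mp) * \<epsilon>)) ^ N"
      using I0 by (intro power_mono) auto
    also have "\<dots> = exp (- (real N * (H / Mp) * \<epsilon>))" by (simp add: exp_of_nat_mult[symmetric] algebra_simps)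
    also have "\<dots> \<le> exp (- ln (C / \<delta>))"
    proof -
      have "real N * (H / Mp) * b = ln (C / \<delta>)" using N1 H_pos Mp_pos unfolding b_eq by (simp add: field_simps)
      moreover have "real N * (H / Mp) * b \<le> real N * (H / Mp) * \<epsilon>"
        using eps N1 H_pos Mp_pos by (intro mult_left_mono) auto
      ultimately show ?thesis by simp
    qed
    also have "\<dots> = \<delta> / C" using C1 \<delta> by (simp add: exp_minus ln_div exp_diff)
    finally show ?thesis using chern[OF s] by linarith
  qed
  define Bad where "Bad = {s \<in> S0. risk n D s - risk_star n Mx D > b}"
  have "space PM - G \<subseteq> (\<Union>s\<in>Bad. A s)"
    unfolding G_def A_def Bad_def by auto
  then have "P.prob (space PM - G) \<le> P.prob (\<Union>s\<in>Bad. A s)"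
    using A_sets S0_fin unfolding Bad_def by (intro P.finite_measure_mono) auto
  also have "\<dots> \<le> (\<Sum>s\<in>Bad. P.prob (A s))"
    using A_sets S0_fin unfolding Bad_def by (intro P.finite_measure_subadditive_finite) auto
  also have "\<dots> \<le> (\<Sum>s\<in>Bad. \<delta> / C)" by (intro sum_mono bad) (auto simp: Bad_def)
  also have "\<dots> \<le> C * (\<delta> / C)"
  proof -
    have "card Bad \<le> card S0" using S0_fin unfolding Bad_def by (intro card_mono) auto
    then have "real (card Bad) \<le> C" unfolding C_def by simp
    moreover have "(\<Sum>s\<in>Bad. \<delta> / C) = real (card Bad) * (\<delta> / C)" by simp
    ultimately show ?thesis using \<delta> C1 by (metis mult_right_mono divide_nonneg_pos less_imp_le less_le_trans zero_less_one)
  qed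
  also have "\<dots> = \<delta>" using C1 by simp
  finally have "P.prob (space PM - G) \<le> \<delta>" .
  then have "P.prob G \<ge> 1 - \<delta>" using P.prob_compl[OF G_sets] by simp
  then show ?thesis unfolding G_def PM_def b_def .
qed

end

theorem proposition7:
  fixes Mx :: "'x measure"
    and D :: "('x \<times> (nat \<Rightarrow> nat)) measure"
    and K :: "'x \<Rightarrow> (nat \<Rightarrow> nat) pmf"
    and n N :: nat
    and S0 :: "('x \<Rightarrow> nat \<Rightarrow> nat) set"
    and H \<delta> :: real
  assumes n2: "n \<ge> 2"
    and N1: "N \<ge> 1"
    and D_prob: "prob_space D"
    and D_sets: "sets D = sets (Mx \<Otimes>\<^sub>M count_space UNIV)"
    and K_meas: "\<And>\<sigma>. (\<lambda>x. pmf (K x) \<sigma>) \<in> borel_measurable Mx"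
    and K_cond: "\<And>A \<sigma>. A \<in> sets Mx \<Longrightarrow>
        emeasure D (A \<times> {\<sigma>}) = (\<integral>\<^sup>+ x\<in>A. ennreal (pmf (K x) \<sigma>) \<partial>(distr D Mx fst))"
    and K_SST: "\<forall>x\<in>space Mx. SST n (K x)"
    and H_def: "H = (INF x\<in>space Mx. Min {\<bar>pw (K x) i j - 1/2\<bar> | i j. 1 \<le> i \<and> i < j \<and> j \<le> n})"
    and H_pos: "H > 0"
    and S0_sub: "S0 \<subseteq> rules Mx n"
    and S0_fin: "finite S0"
    and S0_star: "\<exists>s\<in>S0. \<forall>x\<in>space Mx. s x = sigma_star n (K x)"
    and \<delta>: "0 < \<delta>" "\<delta> < 1"
  shows "measure (Pi\<^sub>M {..<N} (\<lambda>_. D))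
           {\<omega> \<in> space (Pi\<^sub>M {..<N} (\<lambda>_. D)).
              \<forall>s\<in>S0. (\<forall>s'\<in>S0. emp_risk n N \<omega> s \<le> emp_risk n N \<omega> s') \<longrightarrow>
                 risk n D s - risk_star n Mx D
                   \<le> (real (n * (n - 1)) / (2 * H)) * (ln (real (card S0) / \<delta>) / real N)}
         \<ge> 1 - \<delta>"
  proof -
  obtain ss where ss_in: "ss \<in> S0" and ss_eq: "\<forall>x\<in>space Mx. ss x = sigma_star n (K x)"
    using S0_star by blast
  have Hb: "H \<le> \<bar>pw (K x) i j - 1/2\<bar>"
    if x: "x \<in> space Mx" and ij: "i \<in> {1..n}" "j \<in> {1..n}" "i < j" for x i j
  proof -
    define S where "S = (\<lambda>x. {\<bar>pw (K x) i j - 1/2\<bar> | i j. 1 \<le> i \<and> i < j \<and> j \<le> n})"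
    have Sfin: "finite (S y)" for y
    proof (rule finite_subset)
      show "S y \<subseteq> (\<lambda>(i,j). \<bar>pw (K y) i j - 1/2\<bar>) ` ({1..n} \<times> {1..n})" unfolding S_def by force
    qed auto
    have Sne: "S y \<noteq> {}" for y unfolding S_def using n2 by force
    have Snn: "0 \<le> Min (S y)" for y using Sfin Sne by (subst Min_ge_iff) (auto simp: S_def)
    have HS: "H = (INF y\<in>space Mx. Min (S y))" unfolding H_def S_def by simp
    have "(INF y\<in>space Mx. Min (S y)) \<le> Min (S x)"
    proof (rule cINF_lower[OF _ x])
      show "bdd_below ((\<lambda>y. Min (S y)) ` space Mx)" by (rule bdd_belowI[of _ 0]) (use Snn in auto)
    qed
    then have "H \<le> Min (S x)" using HS by simp
    also have "\<dots> \<le> \<bar>pw (K x) i j - 1/2\<bar>"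
      using Sfin by (rule Min_le) (use ij in \<open>auto simp: S_def\<close>)
    finally show ?thesis .
  qed
  interpret setting2 Mx D K n H ss
  proof (intro setting2.intro setting.intro setting2_axioms.intro)
    show "\<And>x. x \<in> space Mx \<Longrightarrow> set_pmf (K x) \<subseteq> perms n" using K_SST unfolding SST_def by auto
    show "prob_space D" by (rule D_prob)
    show "sets D = sets (Mx \<Otimes>\<^sub>M count_space UNIV)" by (rule D_sets)
    show "\<And>\<sigma>. (\<lambda>x. pmf (K x) \<sigma>) \<in> borel_measurable Mx" by (rule K_meas)
    show "\<And>A \<sigma>. A \<in> sets Mx \<Longrightarrow> emeasure D (A \<times> {\<sigma>}) = (\<integral>\<^sup>+ x\<in>A. ennreal (pmf (K x) \<sigma>) \<partial>(distr D Mx fst))"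
      by (rule K_cond)
    show "n \<ge> 2" by (rule n2)
    show "H > 0" by (rule H_pos)
    show "\<And>x i j. x \<in> space Mx \<Longrightarrow> i \<in> {1..n} \<Longrightarrow> j \<in> {1..n} \<Longrightarrow> i < j \<Longrightarrow> H \<le> \<bar>pw (K x) i j - 1/2\<bar>"
      by (rule Hb)
    show "\<And>x. x \<in> space Mx \<Longrightarrow> SST n (K x)" using K_SST by blast
    show "ss \<in> rules Mx n" using ss_in S0_sub by blast
    show "\<And>x. x \<in> space Mx \<Longrightarrow> ss x = sigma_star n (K x)" using ss_eq by blast
  qed
  show ?thesis by (rule final[OF N1 S0_sub S0_fin ss_in \<delta>])
qed

end
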